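(* Let $x=(x_1^\top,\dots,x_m^\top)^\top\in\mathbb R^d$ with $x_i\in\mathbb R^{\bar d}$, and set $x_0=x_{m+1}=0\in\mathbb R^{\bar d}$. Then: (a) writing $\hat x=A^\top Ax=(\hat x_1^\top,\dots,\hat x_m^\top)^\top$ with $\hat x_i\in\mathbb R^{\bar d}$, we have $\mathrm{supp}(\hat x_i)\subset\mathrm{supp}(x_{i-1})\cup\mathrm{supp}(x_i)\cup\mathrm{supp}(x_{i+1})$ for all $i\in[1,m]$; (b) for any $\eta>0$, writing $\tilde x=\mathrm{prox}_{\eta g}(x)=(\tilde x_1^\top,\dots,\tilde x_m^\top)^\top$ with $\tilde x_i\in\mathbb R^{\bar d}$, we have $\mathrm{supp}(\tilde x_i)\subset\mathrm{supp}(x_{i-1})\cup\mathrm{supp}(x_i)\cup\mathrm{supp}(x_{i+1})$ for all $i\in[1,m]$.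
   Context: $\mathrm{supp}(z)=\{j:[z]_j\ne0\}$. Let $L_f>0$, $\beta>0$, integers $m_1\ge2$, $m_2\ge1$ with $m_1m_2$ even, $m=3m_1m_2$, $\bar d\ge5$ odd, $d=m\bar d$. $J_p\in\mathbb R^{(p-1)\times p}$ has $-1$ at $(k,k)$, $1$ at $(k,k+1)$, zero elsewhere. $\mathcal M=\{im_1:i=1,\dots,3m_2-1\}$, $\mathcal M^C=\{1,\dots,m-1\}\setminus\mathcal M$, $A=mL_f(J_{\mathcal M^C}\otimes I_{\bar d})$ with $J_{\mathcal M^C}$ the rows of $J_m$ indexed by $\mathcal M^C$. $g(x)=\beta\sum_{i\in\mathcal M}\|x_i-x_{i+1}\|_1$ and $\mathrm{prox}_{\eta g}(x)=\arg\min_{x'}\{g(x')+\frac1{2\eta}\|x'-x\|^2\}$. (In the paper $\beta$ additionally satisfies $\beta>(50\pi+1+\|A\|)\sqrt m\,\epsilon$ for a fixed $\epsilon\in(0,1)$.) *)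

theory Defs
  imports Complex_Main
begin

text \<open>Block representation of vectors in R^d, d = m * dbar:
  x i j is coordinate j (1..dbar) of block x_i (i in 1..m); x vanishes outside
  this index range, so in particular x_0 = x_(m+1) = 0.\<close>

definition blockvec :: "nat \<Rightarrow> nat \<Rightarrow> (nat \<Rightarrow> nat \<Rightarrow> real) set" where
  "blockvec m dbar = {x. \<forall>i j. (i \<notin> {1..m} \<or> j \<notin> {1..dbar}) \<longrightarrow> x i j = 0}"

definition supp :: "(nat \<Rightarrow> real) \<Rightarrow> nat set" where
  "supp v = {j. v j \<noteq> 0}"

definition Jmat :: "nat \<Rightarrow> nat \<Rightarrow> nat \<Rightarrow> real" where
  "Jmat p k l = (if k \<in> {1..p-1} \<and> l \<in> {1..p} then
                   (if l = k then -1 else if l = k + 1 then 1 else 0) else 0)"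

definition Mset :: "nat \<Rightarrow> nat \<Rightarrow> nat set" where
  "Mset m1 m2 = {i * m1 | i. 1 \<le> i \<and> i \<le> 3 * m2 - 1}"

definition McSet :: "nat \<Rightarrow> nat \<Rightarrow> nat \<Rightarrow> nat set" where
  "McSet m m1 m2 = {1..m-1} - Mset m1 m2"

text \<open>Entries of A = m L_f (J_{M^C} \<otimes> I_dbar). Rows are indexed by pairs (r, j')
  with r \<in> M^C (the row of J_m kept) and j' \<in> {1..dbar}; columns by pairs (c, j)
  with c \<in> {1..m}, j \<in> {1..dbar}.\<close>
definition Aent :: "real \<Rightarrow> nat \<Rightarrow> nat \<Rightarrow> nat \<times> nat \<Rightarrow> nat \<times> nat \<Rightarrow> real" where
  "Aent Lf m dbar rw cl = real m * Lf * Jmat m (fst rw) (fst cl) *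
     (if snd rw = snd cl then 1 else 0)"

definition Aop :: "real \<Rightarrow> nat \<Rightarrow> nat \<Rightarrow> (nat \<Rightarrow> nat \<Rightarrow> real) \<Rightarrow> nat \<Rightarrow> nat \<Rightarrow> real" where
  "Aop Lf m dbar x r j' =
     (\<Sum>c\<in>{1..m}. \<Sum>j\<in>{1..dbar}. Aent Lf m dbar (r, j') (c, j) * x c j)"

definition AtA :: "real \<Rightarrow> nat \<Rightarrow> nat \<Rightarrow> nat \<Rightarrow> nat \<Rightarrow> (nat \<Rightarrow> nat \<Rightarrow> real) \<Rightarrow> nat \<Rightarrow> nat \<Rightarrow> real" where
  "AtA Lf m m1 m2 dbar x c j =
     (\<Sum>r\<in>McSet m m1 m2. \<Sum>j'\<in>{1..dbar}. Aent Lf m dbar (r, j') (c, j) * Aop Lf m dbar x r j')"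

definition gfun :: "real \<Rightarrow> nat \<Rightarrow> nat \<Rightarrow> nat \<Rightarrow> (nat \<Rightarrow> nat \<Rightarrow> real) \<Rightarrow> real" where
  "gfun \<beta> m1 m2 dbar x = \<beta> * (\<Sum>i\<in>Mset m1 m2. \<Sum>j\<in>{1..dbar}. \<bar>x i j - x (i + 1) j\<bar>)"

definition sqdist :: "nat \<Rightarrow> nat \<Rightarrow> (nat \<Rightarrow> nat \<Rightarrow> real) \<Rightarrow> (nat \<Rightarrow> nat \<Rightarrow> real) \<Rightarrow> real" where
  "sqdist m dbar x y = (\<Sum>i\<in>{1..m}. \<Sum>j\<in>{1..dbar}. (x i j - y i j)\<^sup>2)"

definition prox :: "real \<Rightarrow> real \<Rightarrow> nat \<Rightarrow> nat \<Rightarrow> nat \<Rightarrow> nat \<Rightarrow> (nat \<Rightarrow> nat \<Rightarrow> real) \<Rightarrow> (nat \<Rightarrow> nat \<Rightarrow> real)" where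
  "prox \<eta> \<beta> m m1 m2 dbar x =
     (ARG_MIN (\<lambda>x'. gfun \<beta> m1 m2 dbar x' + 1 / (2 * \<eta>) * sqdist m dbar x' x) x'. x' \<in> blockvec m dbar)"

end

theory Submission
  imports Defs
begin

lemma M_props:
  assumes "m1 \<ge> 2" "m = 3*m1*m2" "k \<in> Mset m1 m2"
  shows "m1 dvd k" "m1 \<le> k" "k + m1 \<le> m"
proof -
  obtain i where k: "k = i*m1" "1 \<le> i" "i \<le> 3*m2 - 1" using assms(3) unfolding Mset_def by auto
  show "m1 dvd k" using k by simp
  show "m1 \<le> k" using k by simp
  have "i + 1 \<le> 3*m2" using k by linarith
  hence "(i+1)*m1 \<le> (3*m2)*m1" by (rule mult_le_mono1)
  thus "k + m1 \<le> m" using k assms(2) by (simp add: algebra_simps)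
qed

lemma M_suc:
  assumes "m1 \<ge> 2" "m = 3*m1*m2" "k \<in> Mset m1 m2"
  shows "Suc k \<notin> Mset m1 m2"
proof
  assume "Suc k \<in> Mset m1 m2"
  hence "m1 dvd Suc k" using M_props assms by blast
  moreover have "m1 dvd k" using M_props assms by blast
  ultimately have "m1 dvd (Suc k - k)" by (rule dvd_diff_nat)
  hence "m1 dvd 1" by simp
  thus False using assms(1) by simp
qed

lemma M_fin: "finite (Mset m1 m2)"
proof -
  have "Mset m1 m2 \<subseteq> (\<lambda>i. i*m1) ` {1..3*m2-1}" unfolding Mset_def by force
  thus ?thesis by (rule finite_subset) simp
qed

lemma sum_pairs:
  fixes E :: "nat \<Rightarrow> real"
  assumes "m1 \<ge> 2" "m = 3*m1*m2"
    and E0: "\<And>k. k \<in> {1..m} \<Longrightarrow> k \<notin> Mset m1 m2 \<Longrightarrow> k - 1 \<notin> Mset m1 m2 \<Longrightarrow> E k = 0"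
  shows "(\<Sum>i\<in>Mset m1 m2. E i + E (Suc i)) = (\<Sum>k\<in>{1..m}. E k)"
proof -
  let ?M = "Mset m1 m2"
  have "(\<Sum>i\<in>?M. E i + E (Suc i)) = (\<Sum>i\<in>?M. E i) + (\<Sum>i\<in>?M. E (Suc i))"
    by (simp add: sum.distrib)
  also have "(\<Sum>i\<in>?M. E (Suc i)) = (\<Sum>k\<in>Suc ` ?M. E k)"
    by (simp add: sum.reindex)
  also have "(\<Sum>i\<in>?M. E i) + (\<Sum>k\<in>Suc ` ?M. E k) = (\<Sum>k\<in>?M \<union> Suc ` ?M. E k)"
    using M_suc[OF assms(1,2)] M_fin by (intro sum.union_disjoint[symmetric]) auto
  also have "\<dots> = (\<Sum>k\<in>{1..m}. E k)"
  proof (rule sum.mono_neutral_left)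
    show "?M \<union> Suc ` ?M \<subseteq> {1..m}"
      using M_props[OF assms(1,2)] assms(1) by fastforce
    show "\<forall>i\<in>{1..m} - (?M \<union> Suc ` ?M). E i = 0"
    proof
      fix k assume k: "k \<in> {1..m} - (?M \<union> Suc ` ?M)"
      have "k - 1 \<notin> ?M"
      proof
        assume "k - 1 \<in> ?M"
        moreover have "k = Suc (k - 1)" using k by auto
        ultimately show False using k by (metis DiffD2 UnCI imageI)
      qed
      thus "E k = 0" using k E0 by blast
    qed
  qed simp
  finally show ?thesis .
qed

definition ppc :: "real \<Rightarrow> real \<Rightarrow> real" where
  "ppc c t = max (-c) (min c (t/2))"

definition ystar :: "real \<Rightarrow> nat \<Rightarrow> nat \<Rightarrow> (nat \<Rightarrow> nat \<Rightarrow> real) \<Rightarrow> nat \<Rightarrow> nat \<Rightarrow> real" where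
  "ystar c m1 m2 x k j = (if k \<in> Mset m1 m2 then x k j - ppc c (x k j - x (Suc k) j)
     else if 1 \<le> k \<and> k - 1 \<in> Mset m1 m2 then x k j + ppc c (x (k-1) j - x k j) else x k j)"

lemma ppc_0: "c \<ge> 0 \<Longrightarrow> ppc c 0 = 0"
  unfolding ppc_def by simp

lemma pair_ineq:
  fixes c t z :: real
  assumes "c \<ge> 0"
  shows "c*\<bar>z\<bar> \<ge> c*\<bar>t - 2*ppc c t\<bar> + ppc c t*(z - (t - 2*ppc c t))"
proof (cases "\<bar>t\<bar> \<le> 2*c")
  case True
  hence p: "ppc c t = t/2" unfolding ppc_def by auto
  have "\<bar>t/2\<bar>*\<bar>z\<bar> \<le> c*\<bar>z\<bar>" using True by (intro mult_right_mono) auto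
  moreover have "t/2*z \<le> \<bar>t/2\<bar>*\<bar>z\<bar>" by (metis abs_ge_self abs_mult)
  ultimately show ?thesis unfolding p by simp
next
  case False
  show ?thesis
  proof (cases "t > 0")
    case True
    hence p: "ppc c t = c" using False assms unfolding ppc_def by auto
    have a: "\<bar>t - 2*ppc c t\<bar> = t - 2*c" using p False True by simp
    have "c*z \<le> c*\<bar>z\<bar>" using assms by (simp add: mult_left_mono)
    thus ?thesis unfolding a unfolding p by (simp add: algebra_simps)
  next
    case f2: False
    hence p: "ppc c t = -c" using False assms unfolding ppc_def by auto
    have a: "\<bar>t - 2*ppc c t\<bar> = -(t + 2*c)" using p False f2 by simp
    have "c*(-z) \<le> c*\<bar>z\<bar>" using assms by (intro mult_left_mono) auto
    thus ?thesis unfolding a unfolding p by (simp add: algebra_simps)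
  qed
qed


lemma sq_lem:
  fixes a b c e :: real
  shows "1/(2*e)*(a - b)^2 = 1/(2*e)*(c - b)^2 + 1/(2*e)*(a - c)^2 - (b - c)*(a - c)/e"
proof -
  have h: "(a - b)^2 = (c - b)^2 + (a - c)^2 - 2*((b - c)*(a - c))"
    by (simp add: power2_eq_square algebra_simps)
  have "1/(2*e)*(a - b)^2 = 1/(2*e)*(c - b)^2 + 1/(2*e)*(a - c)^2 - 1/(2*e)*(2*((b - c)*(a - c)))"
    unfolding h by (simp only: right_diff_distrib distrib_left)
  also have "1/(2*e)*(2*((b - c)*(a - c))) = (b - c)*(a - c)/e" by simp
  finally show ?thesis .
qed

lemma e2_lem:
  fixes e p x1 x2 y1 y2 :: real
  assumes "e > 0"
  shows "e*((x1 - (x1 - p))*(y1 - (x1 - p))/e + (x2 - (x2 + p))*(y2 - (x2 + p))/e)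
         = p*((y1 - y2) - ((x1 - x2) - 2*p))"
proof -
  have g: "e*(a/e + b/e) = a + b" for a b :: real using assms by (simp add: distrib_left)
  have "e*((x1 - (x1 - p))*(y1 - (x1 - p))/e + (x2 - (x2 + p))*(y2 - (x2 + p))/e)
      = (x1 - (x1 - p))*(y1 - (x1 - p)) + (x2 - (x2 + p))*(y2 - (x2 + p))"
    by (rule g)
  also have "\<dots> = p*((y1 - y2) - ((x1 - x2) - 2*p))" by (simp add: algebra_simps)
  finally show ?thesis .
qed

lemma Fmain:
  fixes y x :: "nat \<Rightarrow> nat \<Rightarrow> real"
  assumes eta: "\<eta> > 0" and bet: "\<beta> > 0" and m1: "m1 \<ge> 2" and m: "m = 3*m1*m2"
  defines "ys \<equiv> ystar (\<eta>*\<beta>) m1 m2 x"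
  shows "gfun \<beta> m1 m2 dbar ys + 1/(2*\<eta>) * sqdist m dbar ys x + 1/(2*\<eta>) * sqdist m dbar y ys
         \<le> gfun \<beta> m1 m2 dbar y + 1/(2*\<eta>) * sqdist m dbar y x"
proof -
  let ?M = "Mset m1 m2"
  define D where "D k j = (x k j - ys k j) * (y k j - ys k j) / \<eta>" for k j
  have c0: "\<eta>*\<beta> \<ge> 0" using eta bet by simp
  have pair: "\<beta>*\<bar>ys i j - ys (i+1) j\<bar> + (D i j + D (Suc i) j) \<le> \<beta>*\<bar>y i j - y (i+1) j\<bar>"
    if i: "i \<in> ?M" for i j
  proof -
    let ?t = "x i j - x (Suc i) j"
    let ?p = "ppc (\<eta>*\<beta>) ?t"
    have ni: "Suc i \<notin> ?M" using M_suc[OF m1 m i] .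
    have yi: "ys i j = x i j - ?p" using i unfolding ys_def ystar_def by simp
    have yi1: "ys (Suc i) j = x (Suc i) j + ?p" using i ni unfolding ys_def ystar_def by simp
    have "\<eta>*\<beta>*\<bar>y i j - y (Suc i) j\<bar> \<ge> \<eta>*\<beta>*\<bar>?t - 2*?p\<bar> + ?p*((y i j - y (Suc i) j) - (?t - 2*?p))"
      by (rule pair_ineq[OF c0])
    moreover have e1: "ys i j - ys (Suc i) j = ?t - 2*?p" unfolding yi yi1 by simp
    moreover have e2: "\<eta>*(D i j + D (Suc i) j) = ?p*((y i j - y (Suc i) j) - (?t - 2*?p))"
      using eta unfolding D_def yi yi1 by (rule e2_lem)
    ultimately have "\<eta>*(\<beta>*\<bar>ys i j - ys (Suc i) j\<bar> + (D i j + D (Suc i) j)) \<le> \<eta>*(\<beta>*\<bar>y i j - y (Suc i) j\<bar>)"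
      by (simp only: distrib_left e1 e2 mult.assoc[symmetric])
    thus ?thesis using eta by (simp add: mult_le_cancel_left_pos)
  qed
  have sq: "1/(2*\<eta>)*(y k j - x k j)^2 = 1/(2*\<eta>)*(ys k j - x k j)^2 + 1/(2*\<eta>)*(y k j - ys k j)^2 - D k j" for k j
    unfolding D_def by (rule sq_lem)
  have E0: "(\<Sum>j\<in>{1..dbar}. D k j) = 0" if "k \<in> {1..m}" "k \<notin> ?M" "k - 1 \<notin> ?M" for k
    using that unfolding D_def ys_def ystar_def by simp
  have sp: "(\<Sum>i\<in>?M. \<Sum>j\<in>{1..dbar}. D i j + D (Suc i) j) = (\<Sum>k\<in>{1..m}. \<Sum>j\<in>{1..dbar}. D k j)"
    using sum_pairs[OF m1 m, of "\<lambda>k. \<Sum>j\<in>{1..dbar}. D k j"] E0 by (simp add: sum.distrib)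
  have g1: "gfun \<beta> m1 m2 dbar ys + (\<Sum>i\<in>?M. \<Sum>j\<in>{1..dbar}. D i j + D (Suc i) j) \<le> gfun \<beta> m1 m2 dbar y"
  proof -
    have "gfun \<beta> m1 m2 dbar ys + (\<Sum>i\<in>?M. \<Sum>j\<in>{1..dbar}. D i j + D (Suc i) j)
        = (\<Sum>i\<in>?M. \<Sum>j\<in>{1..dbar}. \<beta>*\<bar>ys i j - ys (i+1) j\<bar> + (D i j + D (Suc i) j))"
      by (simp only: gfun_def sum_distrib_left sum.distrib)
    also have "\<dots> \<le> (\<Sum>i\<in>?M. \<Sum>j\<in>{1..dbar}. \<beta>*\<bar>y i j - y (i+1) j\<bar>)"
      by (intro sum_mono) (rule pair)
    also have "\<dots> = gfun \<beta> m1 m2 dbar y" by (simp only: gfun_def sum_distrib_left)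
    finally show ?thesis .
  qed
  have s1: "1/(2*\<eta>) * sqdist m dbar y x = 1/(2*\<eta>) * sqdist m dbar ys x + 1/(2*\<eta>) * sqdist m dbar y ys
       - (\<Sum>k\<in>{1..m}. \<Sum>j\<in>{1..dbar}. D k j)"
  proof -
    have "1/(2*\<eta>) * sqdist m dbar y x = (\<Sum>k\<in>{1..m}. \<Sum>j\<in>{1..dbar}. 1/(2*\<eta>)*(y k j - x k j)^2)"
      by (simp add: sqdist_def sum_distrib_left)
    also have "\<dots> = (\<Sum>k\<in>{1..m}. \<Sum>j\<in>{1..dbar}. 1/(2*\<eta>)*(ys k j - x k j)^2 + 1/(2*\<eta>)*(y k j - ys k j)^2 - D k j)"
      by (intro sum.cong refl sq)
    also have "\<dots> = 1/(2*\<eta>) * sqdist m dbar ys x + 1/(2*\<eta>) * sqdist m dbar y ys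
       - (\<Sum>k\<in>{1..m}. \<Sum>j\<in>{1..dbar}. D k j)"
      by (simp add: sqdist_def sum_distrib_left sum.distrib sum_subtractf)
    finally show ?thesis .
  qed
  show ?thesis using g1 s1 sp by linarith
qed


lemma ystar_block:
  assumes c: "c \<ge> 0" and m1: "m1 \<ge> 2" and m: "m = 3*m1*m2" and x: "x \<in> blockvec m dbar"
  shows "ystar c m1 m2 x \<in> blockvec m dbar"
  unfolding blockvec_def
proof (intro CollectI allI impI)
  fix i j assume ij: "i \<notin> {1..m} \<or> j \<notin> {1..dbar}"
  have x0: "\<And>i j. i \<notin> {1..m} \<or> j \<notin> {1..dbar} \<Longrightarrow> x i j = 0" using x unfolding blockvec_def by blast
  show "ystar c m1 m2 x i j = 0"
  proof (cases "j \<in> {1..dbar}")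
    case False
    thus ?thesis using x0 ppc_0[OF c] unfolding ystar_def by auto
  next
    case True
    hence i: "i \<notin> {1..m}" using ij by blast
    have "i \<notin> Mset m1 m2" using M_props[OF m1 m] i m1 by fastforce
    moreover have "\<not> (1 \<le> i \<and> i - 1 \<in> Mset m1 m2)"
    proof
      assume h: "1 \<le> i \<and> i - 1 \<in> Mset m1 m2"
      hence "i - 1 + m1 \<le> m" using M_props[OF m1 m] by blast
      thus False using h i m1 by auto
    qed
    ultimately show ?thesis using x0 i unfolding ystar_def by auto
  qed
qed

lemma sqdist_nonneg: "sqdist m dbar y z \<ge> 0"
  unfolding sqdist_def by (intro sum_nonneg) auto

lemma sqdist_zero:
  assumes "y \<in> blockvec m dbar" "z \<in> blockvec m dbar" "sqdist m dbar y z \<le> 0"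
  shows "y = z"
proof (intro ext)
  fix i j
  show "y i j = z i j"
  proof (cases "i \<in> {1..m} \<and> j \<in> {1..dbar}")
    case True
    have "sqdist m dbar y z = 0" using assms(3) sqdist_nonneg[of m dbar y z] by linarith
    hence "\<forall>i\<in>{1..m}. (\<Sum>j\<in>{1..dbar}. (y i j - z i j)^2) = 0"
      unfolding sqdist_def by (subst (asm) sum_nonneg_eq_0_iff) (auto intro: sum_nonneg)
    hence "(\<Sum>j\<in>{1..dbar}. (y i j - z i j)^2) = 0" using True by blast
    hence "(y i j - z i j)^2 = 0" using True by (subst (asm) sum_nonneg_eq_0_iff) auto
    thus ?thesis by simp
  next
    case False
    thus ?thesis using assms(1,2) unfolding blockvec_def by auto
  qed
qed

lemma prox_eq:
  assumes eta: "\<eta> > 0" and bet: "\<beta> > 0" and m1: "m1 \<ge> 2" and m: "m = 3*m1*m2"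
    and x: "x \<in> blockvec m dbar"
  shows "prox \<eta> \<beta> m m1 m2 dbar x = ystar (\<eta>*\<beta>) m1 m2 x"
proof -
  let ?ys = "ystar (\<eta>*\<beta>) m1 m2 x"
  let ?F = "\<lambda>x'. gfun \<beta> m1 m2 dbar x' + 1 / (2 * \<eta>) * sqdist m dbar x' x"
  let ?P = "\<lambda>x'. x' \<in> blockvec m dbar"
  have yb: "?P ?ys" using ystar_block[OF _ m1 m x] eta bet by simp
  have le: "?F ?ys + 1/(2*\<eta>) * sqdist m dbar y ?ys \<le> ?F y" for y
    using Fmain[OF eta bet m1 m, of dbar x y] by simp
  have nn: "1/(2*\<eta>) * sqdist m dbar y ?ys \<ge> 0" for y using eta sqdist_nonneg by simp
  have mono: "?F ?ys \<le> ?F y" for y using le[of y] nn[of y] by linarith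
  have am: "is_arg_min ?F ?P ?ys"
    unfolding is_arg_min_def using yb mono leD by blast
  have un: "y = ?ys" if "is_arg_min ?F ?P y" for y
  proof -
    have py: "?P y" and ny: "\<not> ?F ?ys < ?F y" using that yb unfolding is_arg_min_def by auto
    have "1/(2*\<eta>) * sqdist m dbar y ?ys \<le> 0" using le[of y] ny by linarith
    hence "1/(2*\<eta>) * sqdist m dbar y ?ys \<le> 1/(2*\<eta>) * 0" by (simp only: mult_zero_right)
    moreover have "1/(2*\<eta>) > 0" using eta by simp
    ultimately have "sqdist m dbar y ?ys \<le> 0" using mult_le_cancel_left_pos by blast
    thus ?thesis using sqdist_zero py yb by blast
  qed
  show ?thesis unfolding prox_def arg_min_def
    by (rule some_equality) (rule am, rule un)
qed

lemma ystar_supp: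
  assumes c: "c \<ge> 0" and "x (k-1) j = 0" "x k j = 0" "x (Suc k) j = 0"
  shows "ystar c m1 m2 x k j = 0"
  using assms ppc_0[OF c] unfolding ystar_def by simp

lemma AtA_zero:
  assumes "x (c-1) j = 0" "x c j = 0" "x (c+1) j = 0"
  shows "AtA Lf m m1 m2 dbar x c j = 0"
proof -
  have t: "Aent Lf m dbar (r, j') (c, j) * Aop Lf m dbar x r j' = 0" for r j'
  proof (cases "j' = j \<and> Jmat m r c \<noteq> 0")
    case False thus ?thesis unfolding Aent_def by auto
  next
    case True
    hence rc: "c = r \<or> c = r + 1" and jj: "j' = j" unfolding Jmat_def by (auto split: if_splits)
    have z: "Aent Lf m dbar (r, j) (c', j'') * x c' j'' = 0" for c' j''
    proof (cases "j'' = j \<and> Jmat m r c' \<noteq> 0")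
      case False thus ?thesis unfolding Aent_def by auto
    next
      case True
      hence "c' = r \<or> c' = r + 1" unfolding Jmat_def by (auto split: if_splits)
      hence "x c' j = 0" using rc assms by auto
      thus ?thesis using True by simp
    qed
    have "Aop Lf m dbar x r j = 0" unfolding Aop_def by (intro sum.neutral ballI z)
    thus ?thesis using jj by simp
  qed
  show ?thesis unfolding AtA_def by (intro sum.neutral ballI t)
qed

theorem lemma8:
  fixes Lf \<beta> :: real and m1 m2 m dbar :: nat and x :: "nat \<Rightarrow> nat \<Rightarrow> real"
  assumes "Lf > 0" and "\<beta> > 0" and "m1 \<ge> 2" and "m2 \<ge> 1" and "even (m1 * m2)"
    and "m = 3 * m1 * m2" and "dbar \<ge> 5" and "odd dbar"
    and "x \<in> blockvec m dbar"
  shows "(\<forall>i\<in>{1..m}. supp (AtA Lf m m1 m2 dbar x i)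
            \<subseteq> supp (x (i - 1)) \<union> supp (x i) \<union> supp (x (i + 1)))
      \<and> (\<forall>\<eta>>0. \<forall>i\<in>{1..m}. supp (prox \<eta> \<beta> m m1 m2 dbar x i)
            \<subseteq> supp (x (i - 1)) \<union> supp (x i) \<union> supp (x (i + 1)))"
proof (intro conjI allI impI ballI subsetI)
  fix i j assume "j \<in> supp (AtA Lf m m1 m2 dbar x i)"
  thus "j \<in> supp (x (i - 1)) \<union> supp (x i) \<union> supp (x (i + 1))"
    using AtA_zero[of x i j Lf m m1 m2 dbar] unfolding supp_def by auto
next
  fix \<eta> :: real and i j assume eta: "\<eta> > 0" and j: "j \<in> supp (prox \<eta> \<beta> m m1 m2 dbar x i)"
  have p: "prox \<eta> \<beta> m m1 m2 dbar x = ystar (\<eta>*\<beta>) m1 m2 x"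
    using prox_eq[OF eta assms(2,3,6,9)] .
  have c: "\<eta>*\<beta> \<ge> 0" using eta assms(2) by simp
  show "j \<in> supp (x (i - 1)) \<union> supp (x i) \<union> supp (x (i + 1))"
    using j ystar_supp[OF c, of x i j m1 m2] unfolding p supp_def by auto
qed

end
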